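(* Let $D=\{D_1,\dots,D_n\}$ be a set of pairwise disjoint closed balls in $\mathbb{R}^d$ and $s>0$. The set $W$ output by the algorithm ComputeWSPD$(D,s)$ described below is a WSPD for $D$ with respect to $s$.
   Context: Ball $D_i$ has center $c_i$ and radius $r_i\ge0$. $R(X)$ is the smallest axis-parallel box containing $X$, $L_{\max}(R)$ its longest side length; for balls $C,C'$ with centers $c,c'$ and radii $r,r'$, $d(C,C')=|cc'|-(r+r')$. Point-set well-separation: finite $P,Q$ are $s$-well-separated if there are disjoint balls $C_P\supseteq R(P)$, $C_Q\supseteq R(Q)$ of equal radius $\rho$ with $d(C_P,C_Q)\ge s\rho$. Ball well-separation: for $X\subseteq D$ let $X'=\{c_i:D_i\in X\}$; nonempty $A,B\subseteq D$ are $s$-well-separated if there are disjoint balls $C_{A'}\supseteq R(A')$, $C_{B'}\supseteq R(B')$ of equal radius with one of: (i) $|A|=|B|=1$; (ii) $A=\{D_k\}$, $|B|>1$, $d(c_k,C_{B'})-r_k\ge(3s+4)\mathrm{radius}(C_{B'})$; (iii) symmetric to (ii); (iv) $|A|,|B|>1$ and $d(C_{A'},C_{B'})\ge(3s+4)\mathrm{radius}(C_{A'})$ (if all balls of $A\cup B$ have radius $0$, the point-set notion for $A',B'$ is used instead). A WSPD for $D$ w.r.t. $s$ is a set of pairs $\{A_i,B_i\}$ of nonempty subsets of $D$, each $s$-well-separated, such that every two distinct balls $D_p,D_q$ are separated (one in $A_i$, other in $B_i$) by exactly one pair. Algorithm ComputeWSPD$(D,s)$: let $F=\{c_1,\dots,c_n\}$;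 let $T$ be a (Callahan–Kosaraju) split tree of $F$: a binary tree whose leaves are the points of $F$, each node $u$ storing $R(S_u)$ where $S_u$ is the set of points at leaves of the subtree of $u$; let $W'$ be the WSPD of $F$ w.r.t. $3s+6$ computed from $T$ by the Callahan–Kosaraju algorithm (each pair is $\{S_v,S_w\}$ for nodes $v,w$ of $T$). For $X'\subseteq F$ let $X$ denote the set of balls whose centers lie in $X'$. Start with $W=\emptyset$; for each $\{A',B'\}\in W'$: if $|A'|=|B'|=1$ or $|A'|,|B'|>1$, add $\{A,B\}$ to $W$; otherwise, say $A'=\{c_k\}=S_v$ ($v$ a leaf) and $B'=S_w$, add to $W$ the pairs produced by FindPairs$(v,w)$. FindPairs$(v,w)$ with $S_v=\{c_k\}$: let $C_w$ be the ball of radius $(\sqrt d/2)L_{\max}(R(S_w))$ centered at the center of $R(S_w)$; if $d(c_k,C_w)-r_k\ge(3s+4)\,\mathrm{radius}(C_w)$, return the single pair $\{\{D_k\},\text{balls with centers in }S_w\}$; otherwise return the union of FindPairs$(v,w_l)$ and FindPairs$(v,w_r)$ for the two children $w_l,w_r$ of $w$. *)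

theory Defs
  imports "HOL-Analysis.Analysis" "HOL-Library.Uprod"
begin

(* A ball D_i is represented by the pair (center, radius) :: 'a \<times> real;
   the ball itself is cball (fst b) (snd b). *)

definition bb_lo :: "'a::euclidean_space set \<Rightarrow> 'a" where
  "bb_lo X = (\<Sum>i\<in>Basis. (INF x\<in>X. x \<bullet> i) *\<^sub>R i)"

definition bb_hi :: "'a::euclidean_space set \<Rightarrow> 'a" where
  "bb_hi X = (\<Sum>i\<in>Basis. (SUP x\<in>X. x \<bullet> i) *\<^sub>R i)"

definition rbox :: "'a::euclidean_space set \<Rightarrow> 'a set" where
  "rbox X = cbox (bb_lo X) (bb_hi X)"

definition lmax :: "'a::euclidean_space set \<Rightarrow> real" where
  "lmax X = Max ((\<lambda>i. (SUP x\<in>X. x \<bullet> i) - (INF x\<in>X. x \<bullet> i)) ` Basis)"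

definition bcenter :: "'a::euclidean_space set \<Rightarrow> 'a" where
  "bcenter X = (1/2) *\<^sub>R (bb_lo X + bb_hi X)"

definition pt_ws :: "real \<Rightarrow> 'a::euclidean_space set \<Rightarrow> 'a set \<Rightarrow> bool" where
  "pt_ws s P Q \<longleftrightarrow> (\<exists>cp cq \<rho>. \<rho> \<ge> 0 \<and> rbox P \<subseteq> cball cp \<rho> \<and> rbox Q \<subseteq> cball cq \<rho> \<and>
      cball cp \<rho> \<inter> cball cq \<rho> = {} \<and> dist cp cq - (\<rho> + \<rho>) \<ge> s * \<rho>)"

definition ball_ws :: "real \<Rightarrow> ('a::euclidean_space \<times> real) set \<Rightarrow> ('a \<times> real) set \<Rightarrow> bool" where
  "ball_ws s A B \<longleftrightarrow> A \<noteq> {} \<and> B \<noteq> {} \<and>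
    (if (\<forall>b\<in>A \<union> B. snd b = 0) then pt_ws s (fst ` A) (fst ` B)
     else (\<exists>ca cb \<rho>. \<rho> \<ge> 0 \<and> rbox (fst ` A) \<subseteq> cball ca \<rho> \<and> rbox (fst ` B) \<subseteq> cball cb \<rho> \<and>
        cball ca \<rho> \<inter> cball cb \<rho> = {} \<and>
        ((card A = 1 \<and> card B = 1)
         \<or> (\<exists>k. A = {k} \<and> card B > 1 \<and> dist (fst k) cb - (0 + \<rho>) - snd k \<ge> (3 * s + 4) * \<rho>)
         \<or> (\<exists>k. B = {k} \<and> card A > 1 \<and> dist (fst k) ca - (0 + \<rho>) - snd k \<ge> (3 * s + 4) * \<rho>)
         \<or> (card A > 1 \<and> card B > 1 \<and> dist ca cb - (\<rho> + \<rho>) \<ge> (3 * s + 4) * \<rho>))))"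

definition is_wspd :: "('a::euclidean_space \<times> real) set \<Rightarrow> real \<Rightarrow> ('a \<times> real) set uprod set \<Rightarrow> bool" where
  "is_wspd D s W \<longleftrightarrow>
     (\<forall>w\<in>W. \<exists>A B. w = Upair A B \<and> A \<subseteq> D \<and> B \<subseteq> D \<and> ball_ws s A B) \<and>
     (\<forall>p\<in>D. \<forall>q\<in>D. p \<noteq> q \<longrightarrow> (\<exists>!w. w \<in> W \<and> (\<exists>A B. w = Upair A B \<and> p \<in> A \<and> q \<in> B)))"

datatype 'p stree = Leaf 'p | Node "'p stree" "'p stree"

fun leaves :: "'p stree \<Rightarrow> 'p list" where
  "leaves (Leaf p) = [p]"
| "leaves (Node l r) = leaves l @ leaves r"

definition pts :: "'p stree \<Rightarrow> 'p set" where
  "pts t = set (leaves t)"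

definition is_split_tree :: "'p set \<Rightarrow> 'p stree \<Rightarrow> bool" where
  "is_split_tree F T \<longleftrightarrow> pts T = F \<and> distinct (leaves T)"

text \<open>Radius of the ball C_u enclosing R(S_u): (sqrt d / 2) L_max(R(S_u)).\<close>
definition crad :: "'a::euclidean_space stree \<Rightarrow> real" where
  "crad u = sqrt (real DIM('a)) / 2 * lmax (pts u)"

definition ck_sep :: "real \<Rightarrow> 'a::euclidean_space stree \<Rightarrow> 'a stree \<Rightarrow> bool" where
  "ck_sep s v w \<longleftrightarrow> (let \<rho> = max (crad v) (crad w) in
      dist (bcenter (pts v)) (bcenter (pts w)) - (\<rho> + \<rho>) \<ge> s * \<rho>)"

function ck_pairs :: "real \<Rightarrow> 'a::euclidean_space stree \<Rightarrow> 'a stree \<Rightarrow> ('a stree \<times> 'a stree) list" where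
  "ck_pairs s (Leaf p) (Leaf q) =
     (if ck_sep s (Leaf p) (Leaf q) then [(Leaf p, Leaf q)] else [])"
| "ck_pairs s (Leaf p) (Node wl wr) =
     (if ck_sep s (Leaf p) (Node wl wr) then [(Leaf p, Node wl wr)]
      else ck_pairs s (Leaf p) wl @ ck_pairs s (Leaf p) wr)"
| "ck_pairs s (Node vl vr) (Leaf q) =
     (if ck_sep s (Node vl vr) (Leaf q) then [(Node vl vr, Leaf q)]
      else ck_pairs s vl (Leaf q) @ ck_pairs s vr (Leaf q))"
| "ck_pairs s (Node vl vr) (Node wl wr) =
     (if ck_sep s (Node vl vr) (Node wl wr) then [(Node vl vr, Node wl wr)]
      else if lmax (pts (Node vl vr)) \<le> lmax (pts (Node wl wr))
        then ck_pairs s (Node vl vr) wl @ ck_pairs s (Node vl vr) wr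
        else ck_pairs s vl (Node wl wr) @ ck_pairs s vr (Node wl wr))"
  by pat_completeness auto
termination
  by (relation "Wellfounded.measure (\<lambda>(s, v, w). size v + size w)") auto

fun ck_wspd :: "real \<Rightarrow> 'a::euclidean_space stree \<Rightarrow> ('a stree \<times> 'a stree) list" where
  "ck_wspd s (Leaf p) = []"
| "ck_wspd s (Node l r) = ck_wspd s l @ ck_wspd s r @ ck_pairs s l r"

definition balls_of :: "('a \<times> real) set \<Rightarrow> 'a set \<Rightarrow> ('a \<times> real) set" where
  "balls_of D X = {b \<in> D. fst b \<in> X}"

definition the_ball :: "('a \<times> real) set \<Rightarrow> 'a stree \<Rightarrow> 'a \<times> real" where
  "the_ball D v = (THE b. b \<in> D \<and> fst b \<in> pts v)"

fun find_pairs :: "real \<Rightarrow> ('a::euclidean_space \<times> real) \<Rightarrow> 'a stree \<Rightarrow> 'a stree list" where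
  "find_pairs s k w =
     (if dist (fst k) (bcenter (pts w)) - (0 + crad w) - snd k \<ge> (3 * s + 4) * crad w then [w]
      else (case w of Leaf _ \<Rightarrow> [] | Node wl wr \<Rightarrow> find_pairs s k wl @ find_pairs s k wr))"

definition compute_wspd :: "('a::euclidean_space \<times> real) set \<Rightarrow> real \<Rightarrow> 'a stree \<Rightarrow> ('a \<times> real) set uprod set" where
  "compute_wspd D s T = (let W' = set (ck_wspd (3 * s + 6) T) in
     {Upair (balls_of D (pts v)) (balls_of D (pts w)) | v w. (v, w) \<in> W' \<and>
        ((card (pts v) = 1 \<and> card (pts w) = 1) \<or> (card (pts v) > 1 \<and> card (pts w) > 1))}
   \<union> {Upair {the_ball D v} (balls_of D (pts x)) | v w x. (v, w) \<in> W' \<and>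
        card (pts v) = 1 \<and> card (pts w) > 1 \<and> x \<in> set (find_pairs s (the_ball D v) w)}
   \<union> {Upair {the_ball D w} (balls_of D (pts x)) | v w x. (v, w) \<in> W' \<and>
        card (pts w) = 1 \<and> card (pts v) > 1 \<and> x \<in> set (find_pairs s (the_ball D w) v)})"

end

theory Submission
  imports Defs
begin

section \<open>Geometry\<close>

lemma bb_lo_inner: "i \<in> Basis \<Longrightarrow> bb_lo X \<bullet> i = (INF x\<in>X. x \<bullet> i)"
  by (simp add: bb_lo_def)

lemma bb_hi_inner: "i \<in> Basis \<Longrightarrow> bb_hi X \<bullet> i = (SUP x\<in>X. x \<bullet> i)"
  by (simp add: bb_hi_def)

lemma bb_lo_single: "bb_lo {z} = z"
  by (simp add: bb_lo_def euclidean_representation)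

lemma bb_hi_single: "bb_hi {z} = z"
  by (simp add: bb_hi_def euclidean_representation)

lemma rbox_single: "rbox {z} = {z}"
  by (simp add: rbox_def bb_lo_single bb_hi_single)

lemma bcenter_single: "bcenter {z} = z"
  by (simp add: bcenter_def bb_lo_single bb_hi_single scaleR_2[symmetric])

lemma lmax_single: "lmax {z} = 0"
proof -
  have "(\<lambda>i. (SUP x\<in>{z}. x \<bullet> i) - (INF x\<in>{z}. x \<bullet> i)) ` (Basis::'a set) = {0}"
    using nonempty_Basis by (auto simp: image_constant_conv)
  then show ?thesis by (simp add: lmax_def)
qed

lemma spread_nonneg:
  fixes X :: "'a::euclidean_space set"
  assumes "finite X" "X \<noteq> {}"
  shows "(INF x\<in>X. x \<bullet> i) \<le> (SUP x\<in>X. x \<bullet> i)"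
proof -
  obtain y where y: "y \<in> X" using assms by auto
  have "(INF x\<in>X. x \<bullet> i) \<le> y \<bullet> i" using y assms by (intro cInf_le_finite) auto
  also have "\<dots> \<le> (SUP x\<in>X. x \<bullet> i)" using y assms by (intro le_cSup_finite) auto
  finally show ?thesis .
qed

lemma spread_le_lmax:
  fixes X :: "'a::euclidean_space set"
  assumes "i \<in> Basis"
  shows "(SUP x\<in>X. x \<bullet> i) - (INF x\<in>X. x \<bullet> i) \<le> lmax X"
  unfolding lmax_def using assms by (intro Max_ge) auto

lemma lmax_nonneg:
  fixes X :: "'a::euclidean_space set"
  assumes "finite X" "X \<noteq> {}"
  shows "0 \<le> lmax X"
proof -
  obtain i :: 'a where i: "i \<in> Basis" using nonempty_Basis by blast
  show ?thesis using spread_nonneg[OF assms, of i] spread_le_lmax[OF i, of X] by linarith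
qed

lemma lmax_pos:
  fixes X :: "'a::euclidean_space set"
  assumes "finite X" "card X > 1"
  shows "0 < lmax X"
proof -
  obtain x y where xy: "x \<in> X" "y \<in> X" "x \<noteq> y"
    using assms by (metis One_nat_def card_le_Suc0_iff_eq not_le)
  then obtain i where i: "i \<in> Basis" "x \<bullet> i \<noteq> y \<bullet> i" using euclidean_eqI by blast
  have a: "(INF x\<in>X. x \<bullet> i) \<le> x \<bullet> i" "(INF x\<in>X. x \<bullet> i) \<le> y \<bullet> i"
    using xy assms by (auto intro: cInf_le_finite)
  have b: "x \<bullet> i \<le> (SUP x\<in>X. x \<bullet> i)" "y \<bullet> i \<le> (SUP x\<in>X. x \<bullet> i)"
    using xy assms by (auto intro: le_cSup_finite)
  show ?thesis using a b i spread_le_lmax[OF i(1), of X] by linarith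
qed

lemma abs_mid_aux:
  fixes l h u L c :: real
  assumes "c = (l + h) / 2 - u" "h - l \<le> L" "l \<le> u \<and> u \<le> h"
  shows "\<bar>c\<bar> \<le> L / 2"
  using assms by (auto simp: abs_le_iff field_simps)

lemma rbox_sub:
  fixes X :: "'a::euclidean_space set"
  assumes "finite X" "X \<noteq> {}"
  shows "rbox X \<subseteq> cball (bcenter X) (sqrt (real DIM('a)) / 2 * lmax X)"
proof
  fix y assume "y \<in> rbox X"
  then have y: "\<And>i. i \<in> Basis \<Longrightarrow> bb_lo X \<bullet> i \<le> y \<bullet> i \<and> y \<bullet> i \<le> bb_hi X \<bullet> i"
    by (auto simp: rbox_def mem_box)
  have c: "\<And>i. i \<in> Basis \<Longrightarrow> \<bar>(bcenter X - y) \<bullet> i\<bar> \<le> lmax X / 2"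
  proof -
    fix i :: 'a assume i: "i \<in> Basis"
    have "(bcenter X - y) \<bullet> i = (bb_lo X \<bullet> i + bb_hi X \<bullet> i) / 2 - y \<bullet> i"
      by (simp add: bcenter_def inner_diff_left inner_add_left)
    moreover have "bb_hi X \<bullet> i - bb_lo X \<bullet> i \<le> lmax X"
      using spread_le_lmax[OF i, of X] i by (simp add: bb_lo_inner bb_hi_inner)
    ultimately show "\<bar>(bcenter X - y) \<bullet> i\<bar> \<le> lmax X / 2" using y[OF i] abs_mid_aux by metis
  qed
  have "infnorm (bcenter X - y) \<le> lmax X / 2"
    unfolding infnorm_Max using c by (intro Max.boundedI) auto
  then have "norm (bcenter X - y) \<le> sqrt DIM('a) * (lmax X / 2)"
    using norm_le_infnorm[of "bcenter X - y"]
    by (meson mult_left_mono order_trans real_sqrt_ge_zero of_nat_0_le_iff)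
  then show "y \<in> cball (bcenter X) (sqrt (real DIM('a)) / 2 * lmax X)"
    by (simp add: dist_norm)
qed

lemma cball_disj: "dist a b > r1 + r2 \<Longrightarrow> cball a r1 \<inter> cball b r2 = {}"
  by (auto simp: mem_cball) (smt (verit) dist_commute dist_triangle)


section \<open>Well-separation witnesses\<close>

lemma ws_11:
  assumes "fst p \<noteq> fst q"
  shows "ball_ws s {p} {q}"
proof -
  have d: "cball (fst p) 0 \<inter> cball (fst q) 0 = {}" using assms by auto
  have pw: "pt_ws s {fst p} {fst q}"
    unfolding pt_ws_def
    by (rule exI[of _ "fst p"], rule exI[of _ "fst q"], rule exI[of _ 0]) (use assms in \<open>auto simp: rbox_single\<close>)
  have ex: "\<exists>ca cb \<rho>. \<rho> \<ge> 0 \<and> rbox (fst ` {p}) \<subseteq> cball ca \<rho> \<and> rbox (fst ` {q}) \<subseteq> cball cb \<rho> \<and>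
        cball ca \<rho> \<inter> cball cb \<rho> = {} \<and> ((card {p} = 1 \<and> card {q} = 1) \<or> X \<rho> ca cb)" for X
    using d by (intro exI[of _ "fst p"] exI[of _ "fst q"] exI[of _ 0]) (auto simp: rbox_single)
  show ?thesis
    unfolding ball_ws_def using pw ex by simp
qed

lemma ws_1n:
  fixes k :: "'a::euclidean_space \<times> real"
  assumes "B \<noteq> {}" "card B > 1" "rbox (fst ` B) \<subseteq> cball cb \<rho>" "\<rho> > 0"
    and H: "dist (fst k) cb - (0 + \<rho>) - snd k \<ge> (3 * s + 4) * \<rho>" "snd k \<ge> 0" "s > 0"
  shows "ball_ws s {k} B"
proof -
  have sub: "rbox (fst ` {k}) \<subseteq> cball (fst k) \<rho>" using assms by (simp add: rbox_single)
  have "s * \<rho> > 0" using assms by simp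
  moreover have "(3 * s + 4) * \<rho> = 3 * (s * \<rho>) + 4 * \<rho>" by algebra
  ultimately have dd: "dist (fst k) cb > \<rho> + \<rho>" using H assms(4) by linarith
  have disj: "cball (fst k) \<rho> \<inter> cball cb \<rho> = {}" using cball_disj[OF dd] .
  have "s * \<rho> \<le> (3 * s + 3) * \<rho>" using assms by (intro mult_right_mono) auto
  moreover have "(3 * s + 4) * \<rho> = (3 * s + 3) * \<rho> + \<rho>" by algebra
  ultimately have sep: "dist (fst k) cb - (\<rho> + \<rho>) \<ge> s * \<rho>" using H by linarith
  have pw: "pt_ws s (fst ` {k}) (fst ` B)"
    unfolding pt_ws_def using sub assms(3) disj sep assms(4)
    by (intro exI[of _ "fst k"] exI[of _ cb] exI[of _ \<rho>]) auto
  have ex: "\<exists>ca cb \<rho>. \<rho> \<ge> 0 \<and> rbox (fst ` {k}) \<subseteq> cball ca \<rho> \<and> rbox (fst ` B) \<subseteq> cball cb \<rho> \<and>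
        cball ca \<rho> \<inter> cball cb \<rho> = {} \<and>
        ((card {k} = 1 \<and> card B = 1)
         \<or> (\<exists>k'. {k} = {k'} \<and> card B > 1 \<and> dist (fst k') cb - (0 + \<rho>) - snd k' \<ge> (3 * s + 4) * \<rho>)
         \<or> (\<exists>k'. B = {k'} \<and> card {k} > 1 \<and> dist (fst k') ca - (0 + \<rho>) - snd k' \<ge> (3 * s + 4) * \<rho>)
         \<or> (card {k} > 1 \<and> card B > 1 \<and> dist ca cb - (\<rho> + \<rho>) \<ge> (3 * s + 4) * \<rho>))"
    using sub assms(2,3,4) disj H
    by (intro exI[of _ "fst k"] exI[of _ cb] exI[of _ \<rho>]) auto
  show ?thesis unfolding ball_ws_def using pw ex assms(1) by auto
qed

lemma ws_nn:
  fixes A B :: "('a::euclidean_space \<times> real) set"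
  assumes "card A > 1" "card B > 1" "rbox (fst ` A) \<subseteq> cball ca \<rho>" "rbox (fst ` B) \<subseteq> cball cb \<rho>" "\<rho> > 0"
    and H: "dist ca cb - (\<rho> + \<rho>) \<ge> (3 * s + 6) * \<rho>" "s > 0"
  shows "ball_ws s A B"
proof -
  have ne: "A \<noteq> {}" "B \<noteq> {}" using assms(1,2) by auto
  have "s * \<rho> > 0" using assms by simp
  moreover have "(3 * s + 6) * \<rho> = 3 * (s * \<rho>) + 6 * \<rho>" by algebra
  ultimately have dd: "dist ca cb > \<rho> + \<rho>" using H assms(5) by linarith
  have disj: "cball ca \<rho> \<inter> cball cb \<rho> = {}" using cball_disj[OF dd] .
  have "s * \<rho> \<le> (3 * s + 4) * \<rho>" "(3 * s + 4) * \<rho> \<le> (3 * s + 6) * \<rho>"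
    using assms by (auto intro: mult_right_mono)
  then have sep: "dist ca cb - (\<rho> + \<rho>) \<ge> s * \<rho>" "dist ca cb - (\<rho> + \<rho>) \<ge> (3 * s + 4) * \<rho>"
    using H by linarith+
  have pw: "pt_ws s (fst ` A) (fst ` B)"
    unfolding pt_ws_def using assms(3,4,5) disj sep
    by (intro exI[of _ ca] exI[of _ cb] exI[of _ \<rho>]) auto
  have ex: "\<exists>ca cb \<rho>. \<rho> \<ge> 0 \<and> rbox (fst ` A) \<subseteq> cball ca \<rho> \<and> rbox (fst ` B) \<subseteq> cball cb \<rho> \<and>
        cball ca \<rho> \<inter> cball cb \<rho> = {} \<and>
        ((card A = 1 \<and> card B = 1)
         \<or> (\<exists>k. A = {k} \<and> card B > 1 \<and> dist (fst k) cb - (0 + \<rho>) - snd k \<ge> (3 * s + 4) * \<rho>)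
         \<or> (\<exists>k. B = {k} \<and> card A > 1 \<and> dist (fst k) ca - (0 + \<rho>) - snd k \<ge> (3 * s + 4) * \<rho>)
         \<or> (card A > 1 \<and> card B > 1 \<and> dist ca cb - (\<rho> + \<rho>) \<ge> (3 * s + 4) * \<rho>))"
    using assms(1-5) disj sep
    by (intro exI[of _ ca] exI[of _ cb] exI[of _ \<rho>]) auto
  show ?thesis unfolding ball_ws_def using pw ex ne by auto
qed


section \<open>Trees\<close>

lemma pts_Leaf[simp]: "pts (Leaf p) = {p}" by (simp add: pts_def)
lemma pts_Node[simp]: "pts (Node l r) = pts l \<union> pts r" by (simp add: pts_def)
lemma pts_finite[simp]: "finite (pts t)" by (simp add: pts_def)
lemma pts_ne[simp]: "pts t \<noteq> {}" by (induction t) auto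
lemma card_pts_ge1: "card (pts t) \<ge> 1"
  using pts_finite pts_ne by (metis One_nat_def Suc_leI card_gt_0_iff)

lemma distinct_Node: "distinct (leaves (Node l r)) \<longleftrightarrow>
   distinct (leaves l) \<and> distinct (leaves r) \<and> pts l \<inter> pts r = {}"
  unfolding pts_def by simp

declare leaves.simps(2)[simp del]
declare distinct_Node[simp]

lemma crad_Leaf[simp]: "crad (Leaf p) = 0"
  by (simp add: crad_def lmax_single)

lemma ck_sep_Leaf[simp]: "ck_sep s (Leaf p) (Leaf q)"
  by (simp add: ck_sep_def)

lemma ck_pairs_props:
  "(x, y) \<in> set (ck_pairs s v w) \<Longrightarrow> ck_sep s x y \<and> pts x \<subseteq> pts v \<and> pts y \<subseteq> pts w \<and>
     (distinct (leaves v) \<longrightarrow> distinct (leaves x)) \<and> (distinct (leaves w) \<longrightarrow> distinct (leaves y))"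
  by (induction s v w rule: ck_pairs.induct) (auto split: if_splits simp: distinct_Node)

lemma ck_pairs_cover:
  "a \<in> pts v \<Longrightarrow> b \<in> pts w \<Longrightarrow> \<exists>(x, y) \<in> set (ck_pairs s v w). a \<in> pts x \<and> b \<in> pts y"
  by (induction s v w rule: ck_pairs.induct) (auto split: if_splits)

lemma app_unique:
  assumes "\<forall>(x,y)\<in>set LA. f x y \<subseteq> SA" "\<forall>(x,y)\<in>set LB. f x y \<subseteq> SB" "SA \<inter> SB = {}"
    "(x,y) \<in> set (LA @ LB)" "(x',y') \<in> set (LA @ LB)" "c \<in> f x y" "c \<in> f x' y'"
    "(x,y) \<in> set LA \<Longrightarrow> (x',y') \<in> set LA \<Longrightarrow> R"
    "(x,y) \<in> set LB \<Longrightarrow> (x',y') \<in> set LB \<Longrightarrow> R"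
  shows R
proof -
  have "\<not> ((x,y) \<in> set LA \<and> (x',y') \<in> set LB)" using assms(1,2,3,6,7) by blast
  moreover have "\<not> ((x,y) \<in> set LB \<and> (x',y') \<in> set LA)" using assms(1,2,3,6,7) by blast
  ultimately show R using assms(4,5,8,9) by auto
qed

lemma ck_pairs_unique:
  "distinct (leaves v) \<Longrightarrow> distinct (leaves w) \<Longrightarrow>
   (x, y) \<in> set (ck_pairs s v w) \<Longrightarrow> (x', y') \<in> set (ck_pairs s v w) \<Longrightarrow>
   a \<in> pts x \<Longrightarrow> a \<in> pts x' \<Longrightarrow> b \<in> pts y \<Longrightarrow> b \<in> pts y' \<Longrightarrow> x = x' \<and> y = y'"
proof (induction s v w arbitrary: x y x' y' rule: ck_pairs.induct)
  case (1 s p q)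
  then show ?case by (auto split: if_splits)
next
  case (2 s p wl wr)
  show ?case
  proof (cases "ck_sep s (Leaf p) (Node wl wr)")
    case True then show ?thesis using 2 by simp
  next
    case False
    have d: "distinct (leaves wl)" "distinct (leaves wr)" "pts wl \<inter> pts wr = {}"
      using 2(4) unfolding distinct_Node by auto
    show ?thesis
    proof (rule app_unique[where f="\<lambda>x y. pts y" and SA="pts wl" and SB="pts wr" and c=b
            and LA="ck_pairs s (Leaf p) wl" and LB="ck_pairs s (Leaf p) wr" and x=x and y=y and x'=x' and y'=y'])
      show "\<forall>(x, y)\<in>set (ck_pairs s (Leaf p) wl). pts y \<subseteq> pts wl" using ck_pairs_props by fastforce
      show "\<forall>(x, y)\<in>set (ck_pairs s (Leaf p) wr). pts y \<subseteq> pts wr" using ck_pairs_props by fastforce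
      show "pts wl \<inter> pts wr = {}" by (rule d(3))
      show "(x, y) \<in> set (ck_pairs s (Leaf p) wl @ ck_pairs s (Leaf p) wr)" using 2(5) False by simp
      show "(x', y') \<in> set (ck_pairs s (Leaf p) wl @ ck_pairs s (Leaf p) wr)" using 2(6) False by simp
      show "b \<in> pts y" "b \<in> pts y'" using 2 by auto
      show ?thesis if "(x, y) \<in> set (ck_pairs s (Leaf p) wl)" "(x', y') \<in> set (ck_pairs s (Leaf p) wl)"
        using 2(1) False 2(3,7-10) d that by blast
      show ?thesis if "(x, y) \<in> set (ck_pairs s (Leaf p) wr)" "(x', y') \<in> set (ck_pairs s (Leaf p) wr)"
        using 2(2) False 2(3,7-10) d that by blast
    qed
  qed
next
  case (3 s vl vr q)
  show ?case
  proof (cases "ck_sep s (Node vl vr) (Leaf q)")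
    case True then show ?thesis using 3 by simp
  next
    case False
    have d: "distinct (leaves vl)" "distinct (leaves vr)" "pts vl \<inter> pts vr = {}"
      using 3(3) unfolding distinct_Node by auto
    show ?thesis
    proof (rule app_unique[where f="\<lambda>x y. pts x" and SA="pts vl" and SB="pts vr" and c=a
            and LA="ck_pairs s vl (Leaf q)" and LB="ck_pairs s vr (Leaf q)" and x=x and y=y and x'=x' and y'=y'])
      show "\<forall>(x, y)\<in>set (ck_pairs s vl (Leaf q)). pts x \<subseteq> pts vl" using ck_pairs_props by fastforce
      show "\<forall>(x, y)\<in>set (ck_pairs s vr (Leaf q)). pts x \<subseteq> pts vr" using ck_pairs_props by fastforce
      show "pts vl \<inter> pts vr = {}" by (rule d(3))
      show "(x, y) \<in> set (ck_pairs s vl (Leaf q) @ ck_pairs s vr (Leaf q))" using 3(5) False by simp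
      show "(x', y') \<in> set (ck_pairs s vl (Leaf q) @ ck_pairs s vr (Leaf q))" using 3(6) False by simp
      show "a \<in> pts x" "a \<in> pts x'" using 3 by auto
      show ?thesis if "(x, y) \<in> set (ck_pairs s vl (Leaf q))" "(x', y') \<in> set (ck_pairs s vl (Leaf q))"
        using 3(1) False 3(4,7-10) d that by blast
      show ?thesis if "(x, y) \<in> set (ck_pairs s vr (Leaf q))" "(x', y') \<in> set (ck_pairs s vr (Leaf q))"
        using 3(2) False 3(4,7-10) d that by blast
    qed
  qed
next
  case (4 s vl vr wl wr)
  show ?case
  proof (cases "ck_sep s (Node vl vr) (Node wl wr)")
    case True then show ?thesis using 4 by simp
  next
    case False
    note F = False
    show ?thesis
    proof (cases "lmax (pts (Node vl vr)) \<le> lmax (pts (Node wl wr))")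
      case True
      have d: "distinct (leaves wl)" "distinct (leaves wr)" "pts wl \<inter> pts wr = {}"
        using 4(6) unfolding distinct_Node by auto
      show ?thesis
      proof (rule app_unique[where f="\<lambda>x y. pts y" and SA="pts wl" and SB="pts wr" and c=b
              and LA="ck_pairs s (Node vl vr) wl" and LB="ck_pairs s (Node vl vr) wr" and x=x and y=y and x'=x' and y'=y'])
        show "\<forall>(x, y)\<in>set (ck_pairs s (Node vl vr) wl). pts y \<subseteq> pts wl" using ck_pairs_props by fastforce
        show "\<forall>(x, y)\<in>set (ck_pairs s (Node vl vr) wr). pts y \<subseteq> pts wr" using ck_pairs_props by fastforce
        show "pts wl \<inter> pts wr = {}" by (rule d(3))
        show "(x, y) \<in> set (ck_pairs s (Node vl vr) wl @ ck_pairs s (Node vl vr) wr)" using 4(7) F True by simp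
        show "(x', y') \<in> set (ck_pairs s (Node vl vr) wl @ ck_pairs s (Node vl vr) wr)" using 4(8) F True by simp
        show "b \<in> pts y" "b \<in> pts y'" using 4 by auto
        show ?thesis if "(x, y) \<in> set (ck_pairs s (Node vl vr) wl)" "(x', y') \<in> set (ck_pairs s (Node vl vr) wl)"
          using 4(1) F True 4(5,9-12) d that by blast
        show ?thesis if "(x, y) \<in> set (ck_pairs s (Node vl vr) wr)" "(x', y') \<in> set (ck_pairs s (Node vl vr) wr)"
          using 4(2) F True 4(5,9-12) d that by blast
      qed
    next
      case False
      have d: "distinct (leaves vl)" "distinct (leaves vr)" "pts vl \<inter> pts vr = {}"
        using 4(5) unfolding distinct_Node by auto
      show ?thesis
      proof (rule app_unique[where f="\<lambda>x y. pts x" and SA="pts vl" and SB="pts vr" and c=a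
              and LA="ck_pairs s vl (Node wl wr)" and LB="ck_pairs s vr (Node wl wr)" and x=x and y=y and x'=x' and y'=y'])
        show "\<forall>(x, y)\<in>set (ck_pairs s vl (Node wl wr)). pts x \<subseteq> pts vl" using ck_pairs_props by fastforce
        show "\<forall>(x, y)\<in>set (ck_pairs s vr (Node wl wr)). pts x \<subseteq> pts vr" using ck_pairs_props by fastforce
        show "pts vl \<inter> pts vr = {}" by (rule d(3))
        show "(x, y) \<in> set (ck_pairs s vl (Node wl wr) @ ck_pairs s vr (Node wl wr))" using 4(7) F False by simp
        show "(x', y') \<in> set (ck_pairs s vl (Node wl wr) @ ck_pairs s vr (Node wl wr))" using 4(8) F False by simp
        show "a \<in> pts x" "a \<in> pts x'" using 4 by auto
        show ?thesis if "(x, y) \<in> set (ck_pairs s vl (Node wl wr))" "(x', y') \<in> set (ck_pairs s vl (Node wl wr))"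
          using 4(3) F False 4(6,9-12) d that by blast
        show ?thesis if "(x, y) \<in> set (ck_pairs s vr (Node wl wr))" "(x', y') \<in> set (ck_pairs s vr (Node wl wr))"
          using 4(4) F False 4(6,9-12) d that by blast
      qed
    qed
  qed
qed

definition sepP :: "'p \<Rightarrow> 'p \<Rightarrow> 'p stree \<times> 'p stree \<Rightarrow> bool" where
  "sepP a b xy \<longleftrightarrow> (a \<in> pts (fst xy) \<and> b \<in> pts (snd xy)) \<or> (b \<in> pts (fst xy) \<and> a \<in> pts (snd xy))"

lemma ck_wspd_props:
  "(x, y) \<in> set (ck_wspd s T) \<Longrightarrow> ck_sep s x y \<and> pts x \<subseteq> pts T \<and> pts y \<subseteq> pts T \<and>
     (distinct (leaves T) \<longrightarrow> pts x \<inter> pts y = {} \<and> distinct (leaves x) \<and> distinct (leaves y))"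
proof (induction s T rule: ck_wspd.induct)
  case (1 s p)
  then show ?case by simp
next
  case (2 s l r)
  show ?case
  proof (cases "(x, y) \<in> set (ck_pairs s l r)")
    case True
    then show ?thesis using ck_pairs_props[OF True] by (auto simp: distinct_Node)
  next
    case False
    then show ?thesis using 2 by (auto simp: distinct_Node)
  qed
qed

lemma ck_wspd_cover:
  "a \<in> pts T \<Longrightarrow> b \<in> pts T \<Longrightarrow> a \<noteq> b \<Longrightarrow> \<exists>xy \<in> set (ck_wspd s T). sepP a b xy"
proof (induction s T rule: ck_wspd.induct)
  case (1 s p)
  then show ?case by simp
next
  case (2 s l r)
  show ?case
  proof (cases "a \<in> pts l")
    case al: True
    show ?thesis
    proof (cases "b \<in> pts l")
      case True then show ?thesis using 2 al by auto
    next
      case False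
      then have "b \<in> pts r" using 2 by auto
      then obtain x y where "(x, y) \<in> set (ck_pairs s l r)" "a \<in> pts x" "b \<in> pts y"
        using ck_pairs_cover[OF al] by blast
      then show ?thesis unfolding sepP_def by (intro bexI[of _ "(x,y)"]) auto
    qed
  next
    case anl: False
    then have ar: "a \<in> pts r" using 2 by auto
    show ?thesis
    proof (cases "b \<in> pts r")
      case True then show ?thesis using 2 ar by auto
    next
      case False
      then have "b \<in> pts l" using 2 by auto
      then obtain x y where "(x, y) \<in> set (ck_pairs s l r)" "b \<in> pts x" "a \<in> pts y"
        using ck_pairs_cover[OF _ ar] by blast
      then show ?thesis unfolding sepP_def by (intro bexI[of _ "(x,y)"]) auto
    qed
  qed
qed

lemma ck_wspd_unique:
  "distinct (leaves T) \<Longrightarrow> xy \<in> set (ck_wspd s T) \<Longrightarrow> xy' \<in> set (ck_wspd s T) \<Longrightarrow>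
   sepP a b xy \<Longrightarrow> sepP a b xy' \<Longrightarrow> xy = xy'"
proof (induction s T arbitrary: xy xy' rule: ck_wspd.induct)
  case (1 s p)
  then show ?case by simp
next
  case (2 s l r)
  obtain x y x' y' where e: "xy = (x, y)" "xy' = (x', y')" by fastforce
  have d: "distinct (leaves l)" "distinct (leaves r)" "pts l \<inter> pts r = {}"
    using 2(3) unfolding distinct_Node by auto
  have loc: "\<And>x y. (x, y) \<in> set (ck_wspd s (Node l r)) \<Longrightarrow>
      ((x, y) \<in> set (ck_wspd s l) \<and> pts x \<subseteq> pts l \<and> pts y \<subseteq> pts l)
    \<or> ((x, y) \<in> set (ck_wspd s r) \<and> pts x \<subseteq> pts r \<and> pts y \<subseteq> pts r)
    \<or> ((x, y) \<in> set (ck_pairs s l r) \<and> pts x \<subseteq> pts l \<and> pts y \<subseteq> pts r)"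
  proof -
    fix x y assume "(x, y) \<in> set (ck_wspd s (Node l r))"
    then have "(x, y) \<in> set (ck_wspd s l) \<or> (x, y) \<in> set (ck_wspd s r) \<or> (x, y) \<in> set (ck_pairs s l r)"
      by auto
    then show "?thesis x y"
      using ck_wspd_props[of x y s l] ck_wspd_props[of x y s r] ck_pairs_props[of x y s l r] by blast
  qed
  have m: "(x,y) \<in> set (ck_wspd s (Node l r))" "(x',y') \<in> set (ck_wspd s (Node l r))"
    using 2(4,5) e by auto
  from loc[OF m(1)] loc[OF m(2)] show ?case
  proof (elim disjE conjE)
    assume "(x, y) \<in> set (ck_pairs s l r)" "(x', y') \<in> set (ck_pairs s l r)"
      "pts x \<subseteq> pts l" "pts y \<subseteq> pts r" "pts x' \<subseteq> pts l" "pts y' \<subseteq> pts r"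
    with 2(6,7) d e show ?thesis
      using ck_pairs_unique[OF d(1) d(2), of x y s x' y' a b] ck_pairs_unique[OF d(1) d(2), of x y s x' y' b a]
      by (auto simp: sepP_def)
  qed (use 2 e d in \<open>auto simp: sepP_def\<close>)
qed


section \<open>FindPairs\<close>

lemma fp_Leaf: "find_pairs s k (Leaf z) =
  (if dist (fst k) (bcenter (pts (Leaf z))) - (0 + crad (Leaf z)) - snd k \<ge> (3 * s + 4) * crad (Leaf z)
   then [Leaf z] else [])"
  by (subst find_pairs.simps) simp

lemma fp_Node: "find_pairs s k (Node l r) =
  (if dist (fst k) (bcenter (pts (Node l r))) - (0 + crad (Node l r)) - snd k \<ge> (3 * s + 4) * crad (Node l r)
   then [Node l r] else find_pairs s k l @ find_pairs s k r)"
  by (subst find_pairs.simps) simp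

declare find_pairs.simps[simp del]

lemma fp_props:
  "x \<in> set (find_pairs s k w) \<Longrightarrow>
   dist (fst k) (bcenter (pts x)) - (0 + crad x) - snd k \<ge> (3 * s + 4) * crad x \<and> pts x \<subseteq> pts w"
proof (induction w)
  case (Leaf z)
  then show ?case by (simp add: fp_Leaf split: if_splits)
next
  case (Node l r)
  then show ?case by (auto simp add: fp_Node split: if_splits)
qed

lemma fp_cover:
  "(\<forall>z\<in>pts w. snd k \<le> dist (fst k) z) \<Longrightarrow> b \<in> pts w \<Longrightarrow> \<exists>x\<in>set (find_pairs s k w). b \<in> pts x"
proof (induction w)
  case (Leaf z)
  then show ?case by (simp add: fp_Leaf bcenter_single)
next
  case (Node l r)
  then show ?case by (auto simp add: fp_Node)
qed

lemma fp_self: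
  assumes "distinct (leaves (Node l r))" "Node l r \<in> set (find_pairs s k (Node l r))"
  shows "find_pairs s k (Node l r) = [Node l r]"
proof (rule ccontr)
  assume a: "find_pairs s k (Node l r) \<noteq> [Node l r]"
  then have "Node l r \<in> set (find_pairs s k l) \<or> Node l r \<in> set (find_pairs s k r)"
    using assms(2) by (auto simp: fp_Node split: if_splits)
  then have "pts l \<union> pts r \<subseteq> pts l \<or> pts l \<union> pts r \<subseteq> pts r" using fp_props by fastforce
  moreover have "pts l \<inter> pts r = {}" using assms(1) by simp
  ultimately show False using pts_ne[of l] pts_ne[of r] by blast
qed

lemma fp_unique:
  "distinct (leaves w) \<Longrightarrow> x \<in> set (find_pairs s k w) \<Longrightarrow> x' \<in> set (find_pairs s k w) \<Longrightarrow>
   b \<in> pts x \<Longrightarrow> b \<in> pts x' \<Longrightarrow> x = x'"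
proof (induction w)
  case (Leaf z)
  then show ?case by (simp add: fp_Leaf split: if_splits)
next
  case (Node l r)
  show ?case
  proof (cases "x \<in> set (find_pairs s k l)")
    case True
    then have "b \<in> pts l" using fp_props[OF True] Node by auto
    show ?thesis
    proof (cases "x' \<in> set (find_pairs s k l)")
      case True
      then show ?thesis using Node \<open>x \<in> set (find_pairs s k l)\<close> by (simp add: fp_Node split: if_splits)
    next
      case False
      then have "x' \<in> set (find_pairs s k r) \<or> x' = Node l r" using Node(5) by (auto simp: fp_Node split: if_splits)
      then show ?thesis
      proof
        assume "x' \<in> set (find_pairs s k r)"
        then have "b \<in> pts r" using fp_props Node by blast
        then show ?thesis using \<open>b \<in> pts l\<close> Node(3) by auto
      next
        assume "x' = Node l r"
        then show ?thesis using Node(3,4,5) fp_self[of l r s k] by auto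
      qed
    qed
  next
    case nl: False
    show ?thesis
    proof (cases "x = Node l r")
      case True
      then show ?thesis using Node(3,4,5) fp_self[of l r s k] by auto
    next
      case False
      then have eq: "find_pairs s k (Node l r) = find_pairs s k l @ find_pairs s k r"
        using Node(4) by (auto simp: fp_Node split: if_splits)
      then have xr: "x \<in> set (find_pairs s k r)" using nl Node(4) by auto
      then have br: "b \<in> pts r" using fp_props Node by blast
      have "x' \<in> set (find_pairs s k r) \<or> x' \<in> set (find_pairs s k l)" using Node(5) eq
        by auto
      then show ?thesis
      proof
        assume "x' \<in> set (find_pairs s k r)"
        then show ?thesis using Node xr by auto
      next
        assume "x' \<in> set (find_pairs s k l)"
        then have "b \<in> pts l" using fp_props Node by blast
        then show ?thesis using br Node(3) by auto
      qed
    qed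
  qed
qed


section \<open>Balls\<close>

definition sepU :: "'b \<Rightarrow> 'b \<Rightarrow> 'b set uprod \<Rightarrow> bool" where
  "sepU p q u \<longleftrightarrow> (\<exists>A B. u = Upair A B \<and> p \<in> A \<and> q \<in> B)"

lemma sepU_sym: "sepU p q u \<longleftrightarrow> sepU q p u"
  unfolding sepU_def by (metis Upair_inject)

lemma sepU_Upair: "sepU p q (Upair A B) \<longleftrightarrow> (p \<in> A \<and> q \<in> B) \<or> (p \<in> B \<and> q \<in> A)"
  unfolding sepU_def by auto

definition gen1 :: "('a::euclidean_space \<times> real) set \<Rightarrow> real \<Rightarrow> 'a stree \<Rightarrow> 'a stree \<Rightarrow> ('a \<times> real) set uprod set" where
  "gen1 D s v w = {Upair {the_ball D v} (balls_of D (pts x)) | x. x \<in> set (find_pairs s (the_ball D v) w)}"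

definition gen :: "('a::euclidean_space \<times> real) set \<Rightarrow> real \<Rightarrow> 'a stree \<Rightarrow> 'a stree \<Rightarrow> ('a \<times> real) set uprod set" where
  "gen D s v w = (if (card (pts v) = 1 \<and> card (pts w) = 1) \<or> (card (pts v) > 1 \<and> card (pts w) > 1)
     then {Upair (balls_of D (pts v)) (balls_of D (pts w))}
     else if card (pts v) = 1 then gen1 D s v w else gen1 D s w v)"

lemma mem_balls_of: "q \<in> balls_of D X \<longleftrightarrow> q \<in> D \<and> fst q \<in> X"
  by (simp add: balls_of_def)

lemma compute_wspd_gen:
  "compute_wspd D s T = (\<Union>(v, w)\<in>set (ck_wspd (3 * s + 6) T). gen D s v w)"
proof (rule set_eqI, rule iffI)
  let ?P = "set (ck_wspd (3 * s + 6) T)"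
  fix u assume "u \<in> compute_wspd D s T"
  then consider (a) v w where "(v, w) \<in> ?P" "(card (pts v) = 1 \<and> card (pts w) = 1) \<or> (card (pts v) > 1 \<and> card (pts w) > 1)"
      "u = Upair (balls_of D (pts v)) (balls_of D (pts w))"
    | (b) v w x where "(v, w) \<in> ?P" "card (pts v) = 1" "card (pts w) > 1" "x \<in> set (find_pairs s (the_ball D v) w)"
      "u = Upair {the_ball D v} (balls_of D (pts x))"
    | (c) v w x where "(v, w) \<in> ?P" "card (pts w) = 1" "card (pts v) > 1" "x \<in> set (find_pairs s (the_ball D w) v)"
      "u = Upair {the_ball D w} (balls_of D (pts x))"
    unfolding compute_wspd_def Let_def by blast
  then show "u \<in> (\<Union>(v, w)\<in>?P. gen D s v w)"
  proof cases
    case a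
    then have "u \<in> gen D s v w" by (simp add: gen_def)
    then show ?thesis using a(1) by blast
  next
    case b
    then have "u \<in> gen D s v w" by (auto simp: gen_def gen1_def)
    then show ?thesis using b(1) by blast
  next
    case c
    then have "u \<in> gen D s v w" by (auto simp: gen_def gen1_def)
    then show ?thesis using c(1) by blast
  qed
next
  let ?P = "set (ck_wspd (3 * s + 6) T)"
  fix u assume "u \<in> (\<Union>(v, w)\<in>?P. gen D s v w)"
  then obtain v w where vw: "(v, w) \<in> ?P" "u \<in> gen D s v w" by blast
  have c1: "card (pts v) \<ge> 1" "card (pts w) \<ge> 1" by (rule card_pts_ge1)+
  show "u \<in> compute_wspd D s T"
  proof (cases "(card (pts v) = 1 \<and> card (pts w) = 1) \<or> (card (pts v) > 1 \<and> card (pts w) > 1)")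
    case True
    then have "u = Upair (balls_of D (pts v)) (balls_of D (pts w))" using vw(2) by (simp add: gen_def)
    then show ?thesis using True vw(1) unfolding compute_wspd_def Let_def by blast
  next
    case False
    show ?thesis
    proof (cases "card (pts v) = 1")
      case True
      then have w1: "card (pts w) > 1" using False c1 by auto
      obtain x where "x \<in> set (find_pairs s (the_ball D v) w)" "u = Upair {the_ball D v} (balls_of D (pts x))"
        using vw(2) False True by (auto simp: gen_def gen1_def)
      then show ?thesis using True w1 vw(1) unfolding compute_wspd_def Let_def by blast
    next
      case nv: False
      then have w1: "card (pts w) = 1" "card (pts v) > 1" using False c1 by auto
      obtain x where "x \<in> set (find_pairs s (the_ball D w) v)" "u = Upair {the_ball D w} (balls_of D (pts x))"
        using vw(2) False nv by (auto simp: gen_def gen1_def)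
      then show ?thesis using w1 vw(1) unfolding compute_wspd_def Let_def by blast
    qed
  qed
qed

context
  fixes D :: "('a::euclidean_space \<times> real) set"
  assumes rad: "\<forall>b\<in>D. snd b \<ge> 0"
    and disj: "\<forall>b\<in>D. \<forall>b'\<in>D. b \<noteq> b' \<longrightarrow> cball (fst b) (snd b) \<inter> cball (fst b') (snd b') = {}"
begin

lemma far: "p \<in> D \<Longrightarrow> q \<in> D \<Longrightarrow> p \<noteq> q \<Longrightarrow> snd p < dist (fst p) (fst q)"
proof -
  assume a: "p \<in> D" "q \<in> D" "p \<noteq> q"
  have "fst q \<in> cball (fst q) (snd q)" using rad a by simp
  then have "fst q \<notin> cball (fst p) (snd p)" using disj a by blast
  then show ?thesis by (simp add: mem_cball)
qed

lemma fst_inj: "p \<in> D \<Longrightarrow> q \<in> D \<Longrightarrow> fst p = fst q \<Longrightarrow> p = q"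
proof (rule ccontr)
  assume a: "p \<in> D" "q \<in> D" "fst p = fst q" "p \<noteq> q"
  have "snd p < dist (fst p) (fst q)" by (rule far[OF a(1,2,4)])
  moreover have "snd p \<ge> 0" using rad a(1) by blast
  ultimately show False using a(3) by simp
qed

lemma inj_fst: "inj_on fst D"
  unfolding inj_on_def using fst_inj by blast

lemma bo_fst: "X \<subseteq> fst ` D \<Longrightarrow> fst ` balls_of D X = X"
  by (auto simp: balls_of_def)

lemma bo_card: "X \<subseteq> fst ` D \<Longrightarrow> card (balls_of D X) = card X"
proof -
  assume X: "X \<subseteq> fst ` D"
  have "inj_on fst (balls_of D X)" using inj_fst by (rule inj_on_subset) (auto simp: balls_of_def)
  then have "card (fst ` balls_of D X) = card (balls_of D X)" by (rule card_image)
  then show ?thesis using bo_fst[OF X] by simp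
qed

lemma bo_single: "p \<in> D \<Longrightarrow> balls_of D {fst p} = {p}"
proof (rule set_eqI)
  fix b assume p: "p \<in> D"
  show "b \<in> balls_of D {fst p} \<longleftrightarrow> b \<in> {p}"
  proof
    assume "b \<in> balls_of D {fst p}"
    then have "b \<in> D" "fst b = fst p" by (auto simp: balls_of_def)
    then show "b \<in> {p}" using fst_inj[OF _ p] by blast
  qed (use p in \<open>simp add: balls_of_def\<close>)
qed

lemma tb: "p \<in> D \<Longrightarrow> pts v = {fst p} \<Longrightarrow> the_ball D v = p"
  unfolding the_ball_def
proof (rule the_equality)
  assume "p \<in> D" "pts v = {fst p}"
  then show "p \<in> D \<and> fst p \<in> pts v" by simp
  fix b assume "b \<in> D \<and> fst b \<in> pts v"
  then show "b = p" using fst_inj[OF _ \<open>p \<in> D\<close>] \<open>pts v = {fst p}\<close> by auto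
qed

lemma single_pts:
  assumes "card (pts v) = 1" "pts v \<subseteq> fst ` D"
  obtains p where "p \<in> D" "pts v = {fst p}"
proof -
  obtain c where c: "pts v = {c}" using assms(1) card_1_singletonE by blast
  then obtain p where "p \<in> D" "c = fst p" using assms(2) by auto
  then show ?thesis using that c by blast
qed

lemma crad_pos: "card (pts x) > 1 \<Longrightarrow> crad x > 0"
  unfolding crad_def using lmax_pos[of "pts x"] by simp

lemma rbox_crad: "rbox (pts x) \<subseteq> cball (bcenter (pts x)) (crad x)"
  unfolding crad_def by (rule rbox_sub) auto

lemma gen1_A:
  assumes "card (pts v) = 1" "pts v \<subseteq> fst ` D" "pts w \<subseteq> fst ` D" "pts v \<inter> pts w = {}" "s > 0"
    and u: "u \<in> gen1 D s v w"
  shows "\<exists>A B. u = Upair A B \<and> A \<subseteq> D \<and> B \<subseteq> D \<and> ball_ws s A B"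
proof -
  obtain p where p: "p \<in> D" "pts v = {fst p}" using single_pts assms(1,2) by blast
  then have tbv: "the_ball D v = p" by (rule tb)
  obtain x where x: "u = Upair {p} (balls_of D (pts x))" "x \<in> set (find_pairs s p w)"
    using u tbv unfolding gen1_def by auto
  have fx: "dist (fst p) (bcenter (pts x)) - (0 + crad x) - snd p \<ge> (3 * s + 4) * crad x"
    "pts x \<subseteq> pts w" using fp_props[OF x(2)] by auto
  have xD: "pts x \<subseteq> fst ` D" using fx(2) assms(3) by auto
  have ws: "ball_ws s {p} (balls_of D (pts x))"
  proof (cases "card (pts x) = 1")
    case True
    then obtain q where q: "q \<in> D" "pts x = {fst q}" using single_pts xD by blast
    have "fst p \<noteq> fst q" using p q fx(2) assms(4) by auto
    then show ?thesis using bo_single[OF q(1)] q(2) ws_11 by metis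
  next
    case False
    then have c1: "card (pts x) > 1" using card_pts_ge1[of x] by linarith
    show ?thesis
    proof (rule ws_1n)
      show "balls_of D (pts x) \<noteq> {}" using bo_card[OF xD] c1 by auto
      show "card (balls_of D (pts x)) > 1" using bo_card[OF xD] c1 by auto
      show "rbox (fst ` balls_of D (pts x)) \<subseteq> cball (bcenter (pts x)) (crad x)"
        using bo_fst[OF xD] rbox_crad by simp
      show "crad x > 0" using crad_pos[OF c1] .
      show "dist (fst p) (bcenter (pts x)) - (0 + crad x) - snd p \<ge> (3 * s + 4) * crad x" by (rule fx(1))
      show "snd p \<ge> 0" using rad p by auto
      show "s > 0" by (rule assms(5))
    qed
  qed
  show ?thesis using ws x(1) p(1) by (auto simp: balls_of_def)
qed

lemma gen1_B:
  assumes "card (pts v) = 1" "pts v \<subseteq> fst ` D" "pts w \<subseteq> fst ` D" "pts v \<inter> pts w = {}"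
    "distinct (leaves w)"
    and pq: "p \<in> D" "q \<in> D" "fst p \<in> pts v" "fst q \<in> pts w"
  shows "\<exists>!u. u \<in> gen1 D s v w \<and> sepU p q u"
proof -
  have pv: "pts v = {fst p}" using assms(1) pq(3) by (metis card_1_singletonE singletonD)
  then have tbv: "the_ball D v = p" using tb pq(1) by blast
  have g: "gen1 D s v w = {Upair {p} (balls_of D (pts x)) | x. x \<in> set (find_pairs s p w)}"
    unfolding gen1_def tbv ..
  have "\<forall>z\<in>pts w. snd p \<le> dist (fst p) z"
  proof
    fix z assume z: "z \<in> pts w"
    then obtain q' where q': "q' \<in> D" "z = fst q'" using assms(3) by auto
    have "q' \<noteq> p" using z q' pv assms(4) by auto
    then show "snd p \<le> dist (fst p) z" using far[OF pq(1) q'(1)] q' by simp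
  qed
  then obtain x where x: "x \<in> set (find_pairs s p w)" "fst q \<in> pts x"
    using fp_cover pq(4) by blast
  have ex: "Upair {p} (balls_of D (pts x)) \<in> gen1 D s v w \<and> sepU p q (Upair {p} (balls_of D (pts x)))"
    using g x pq by (auto simp: sepU_Upair mem_balls_of)
  have pq_ne: "p \<noteq> q" using pv pq assms(4) by auto
  show ?thesis
  proof (rule ex1I[where P="\<lambda>u. u \<in> gen1 D s v w \<and> sepU p q u", OF ex])
    fix u assume u: "u \<in> gen1 D s v w \<and> sepU p q u"
    then obtain x' where x': "u = Upair {p} (balls_of D (pts x'))" "x' \<in> set (find_pairs s p w)"
      using g by auto
    have "fst q \<in> pts x'" using u x' pq_ne by (auto simp: sepU_Upair mem_balls_of)
    then have "x' = x" using fp_unique[OF assms(5) x'(2) x(1)] x(2) by blast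
    then show "u = Upair {p} (balls_of D (pts x))" using x' by simp
  qed
qed

lemma gen1_C:
  assumes "card (pts v) = 1" "pts v \<subseteq> fst ` D"
    and u: "u \<in> gen1 D s v w" "sepU p q u" "p \<noteq> q"
  shows "sepP (fst p) (fst q) (v, w)"
proof -
  obtain b where b: "b \<in> D" "pts v = {fst b}" using single_pts assms(1,2) by blast
  then have tbv: "the_ball D v = b" by (rule tb)
  obtain x where x: "u = Upair {b} (balls_of D (pts x))" "x \<in> set (find_pairs s b w)"
    using u tbv unfolding gen1_def by auto
  have "pts x \<subseteq> pts w" using fp_props[OF x(2)] by auto
  then show ?thesis using u(2,3) x(1) b(2) by (auto simp: sepU_Upair mem_balls_of sepP_def)
qed


lemma ex_pair: "u = Upair A B \<Longrightarrow> A \<subseteq> D \<Longrightarrow> B \<subseteq> D \<Longrightarrow> ball_ws s A B \<Longrightarrow>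
  \<exists>A B. u = Upair A B \<and> A \<subseteq> D \<and> B \<subseteq> D \<and> ball_ws s A B"
  by blast

lemma bsub: "balls_of D X \<subseteq> D" by (auto simp: balls_of_def)

lemma gen_A_11:
  assumes "pts v \<subseteq> fst ` D" "pts w \<subseteq> fst ` D" "pts v \<inter> pts w = {}"
    "card (pts v) = 1" "card (pts w) = 1"
  shows "ball_ws s (balls_of D (pts v)) (balls_of D (pts w))"
proof -
  obtain p where p: "p \<in> D" "pts v = {fst p}" using single_pts assms(4,1) by blast
  obtain q where q: "q \<in> D" "pts w = {fst q}" using single_pts assms(5,2) by blast
  have "fst p \<noteq> fst q" using p q assms(3) by auto
  then have "ball_ws s {p} {q}" by (rule ws_11)
  moreover have "balls_of D (pts v) = {p}" "balls_of D (pts w) = {q}"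
    using bo_single p q by simp_all
  ultimately show ?thesis by simp
qed

lemma gen_A_nn:
  assumes "pts v \<subseteq> fst ` D" "pts w \<subseteq> fst ` D" "ck_sep (3 * s + 6) v w" "s > 0"
    "card (pts v) > 1" "card (pts w) > 1"
  shows "ball_ws s (balls_of D (pts v)) (balls_of D (pts w))"
proof -
  define \<rho> where "\<rho> = max (crad v) (crad w)"
  have rpos: "\<rho> > 0" using crad_pos[OF assms(5)] unfolding \<rho>_def by simp
  have sepv: "dist (bcenter (pts v)) (bcenter (pts w)) - (\<rho> + \<rho>) \<ge> (3 * s + 6) * \<rho>"
    using assms(3) unfolding ck_sep_def \<rho>_def Let_def by simp
  have cv: "card (balls_of D (pts v)) > 1" using bo_card[OF assms(1)] assms(5) by simp
  have cw: "card (balls_of D (pts w)) > 1" using bo_card[OF assms(2)] assms(6) by simp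
  have "cball (bcenter (pts v)) (crad v) \<subseteq> cball (bcenter (pts v)) \<rho>"
    by (rule subset_cball) (simp add: \<rho>_def)
  then have rv: "rbox (fst ` balls_of D (pts v)) \<subseteq> cball (bcenter (pts v)) \<rho>"
    using bo_fst[OF assms(1)] rbox_crad[of v] by simp
  have "cball (bcenter (pts w)) (crad w) \<subseteq> cball (bcenter (pts w)) \<rho>"
    by (rule subset_cball) (simp add: \<rho>_def)
  then have rw: "rbox (fst ` balls_of D (pts w)) \<subseteq> cball (bcenter (pts w)) \<rho>"
    using bo_fst[OF assms(2)] rbox_crad[of w] by simp
  show ?thesis by (rule ws_nn[OF cv cw rv rw rpos sepv assms(4)])
qed

lemma gen_A:
  assumes "pts v \<subseteq> fst ` D" "pts w \<subseteq> fst ` D" "pts v \<inter> pts w = {}" "ck_sep (3 * s + 6) v w" "s > 0"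
    and u: "u \<in> gen D s v w"
  shows "\<exists>A B. u = Upair A B \<and> A \<subseteq> D \<and> B \<subseteq> D \<and> ball_ws s A B"
proof -
  have c1: "card (pts v) \<ge> 1" "card (pts w) \<ge> 1" by (rule card_pts_ge1)+
  have o: "card (pts v) = 1 \<or> card (pts v) > 1" "card (pts w) = 1 \<or> card (pts w) > 1" using c1 by linarith+
  show ?thesis
  proof (cases "card (pts v) = 1")
    case v1: True
    show ?thesis
    proof (cases "card (pts w) = 1")
      case True
      then have "u = Upair (balls_of D (pts v)) (balls_of D (pts w))" using u v1 by (simp add: gen_def)
      then show ?thesis using ex_pair bsub gen_A_11[OF assms(1,2,3) v1 True] by blast
    next
      case False
      then have c: "card (pts w) > 1" using o by blast
      then have "u \<in> gen1 D s v w" using u v1 by (simp add: gen_def)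
      then show ?thesis by (rule gen1_A[OF v1 assms(1,2,3,5)])
    qed
  next
    case False
    then have v1: "card (pts v) > 1" using o by blast
    show ?thesis
    proof (cases "card (pts w) = 1")
      case True
      then have "u \<in> gen1 D s w v" using u v1 by (simp add: gen_def)
      moreover have "pts w \<inter> pts v = {}" using assms(3) by blast
      ultimately show ?thesis using gen1_A[OF True assms(2,1) _ assms(5)] by blast
    next
      case False
      then have w1: "card (pts w) > 1" using o by blast
      then have "u = Upair (balls_of D (pts v)) (balls_of D (pts w))" using u v1 by (simp add: gen_def)
      then show ?thesis using ex_pair bsub gen_A_nn[OF assms(1,2,4,5) v1 w1] by blast
    qed
  qed
qed

lemma gen_B:
  assumes "pts v \<subseteq> fst ` D" "pts w \<subseteq> fst ` D" "pts v \<inter> pts w = {}"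
    "distinct (leaves v)" "distinct (leaves w)"
    and pq: "p \<in> D" "q \<in> D" "fst p \<in> pts v" "fst q \<in> pts w"
  shows "\<exists>!u. u \<in> gen D s v w \<and> sepU p q u"
proof -
  have c1: "card (pts v) \<ge> 1" "card (pts w) \<ge> 1" by (rule card_pts_ge1)+
  show ?thesis
  proof (cases "(card (pts v) = 1 \<and> card (pts w) = 1) \<or> (card (pts v) > 1 \<and> card (pts w) > 1)")
    case True
    then have g: "gen D s v w = {Upair (balls_of D (pts v)) (balls_of D (pts w))}" by (simp add: gen_def)
    have "sepU p q (Upair (balls_of D (pts v)) (balls_of D (pts w)))"
      using pq by (simp add: sepU_Upair mem_balls_of)
    then show ?thesis unfolding g by auto
  next
    case False
    show ?thesis
    proof (cases "card (pts v) = 1")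
      case True
      then have g: "gen D s v w = gen1 D s v w" using False by (simp add: gen_def)
      show ?thesis unfolding g by (rule gen1_B) (use True assms in auto)
    next
      case nv: False
      have w1: "card (pts w) = 1" using False nv c1 by auto
      then have g: "gen D s v w = gen1 D s w v" using False nv by (simp add: gen_def)
      have "\<exists>!u. u \<in> gen1 D s w v \<and> sepU q p u"
        by (rule gen1_B) (use w1 assms in auto)
      then show ?thesis unfolding g by (simp only: sepU_sym[of q p])
    qed
  qed
qed

lemma gen_C:
  assumes "pts v \<subseteq> fst ` D" "pts w \<subseteq> fst ` D"
    and u: "u \<in> gen D s v w" "sepU p q u" "p \<noteq> q"
  shows "sepP (fst p) (fst q) (v, w)"
proof -
  have c1: "card (pts v) \<ge> 1" "card (pts w) \<ge> 1" by (rule card_pts_ge1)+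
  show ?thesis
  proof (cases "(card (pts v) = 1 \<and> card (pts w) = 1) \<or> (card (pts v) > 1 \<and> card (pts w) > 1)")
    case True
    then have "u = Upair (balls_of D (pts v)) (balls_of D (pts w))" using u by (simp add: gen_def)
    then show ?thesis using u(2) by (auto simp: sepU_Upair mem_balls_of sepP_def)
  next
    case False
    show ?thesis
    proof (cases "card (pts v) = 1")
      case True
      then have "u \<in> gen1 D s v w" using False u by (simp add: gen_def)
      then show ?thesis by (rule gen1_C[OF True assms(1) _ u(2,3)])
    next
      case nv: False
      have w1: "card (pts w) = 1" using False nv c1 by auto
      then have "u \<in> gen1 D s w v" using False nv u by (simp add: gen_def)
      then have "sepP (fst p) (fst q) (w, v)" using gen1_C[OF w1 assms(2) _ u(2,3)] by blast
      then show ?thesis by (auto simp: sepP_def)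
    qed
  qed
qed

lemma main:
  assumes "s > 0" "is_split_tree (fst ` D) T"
  shows "is_wspd D s (compute_wspd D s T)"
proof -
  let ?P = "set (ck_wspd (3 * s + 6) T)"
  have T: "pts T = fst ` D" "distinct (leaves T)" using assms(2) by (auto simp: is_split_tree_def)
  have good: "pts v \<subseteq> fst ` D \<and> pts w \<subseteq> fst ` D \<and> pts v \<inter> pts w = {} \<and>
      distinct (leaves v) \<and> distinct (leaves w) \<and> ck_sep (3 * s + 6) v w" if "(v, w) \<in> ?P" for v w
    using ck_wspd_props[OF that] T by auto
  have W: "compute_wspd D s T = (\<Union>(v, w)\<in>?P. gen D s v w)" by (rule compute_wspd_gen)
  have part1: "\<forall>u\<in>compute_wspd D s T. \<exists>A B. u = Upair A B \<and> A \<subseteq> D \<and> B \<subseteq> D \<and> ball_ws s A B"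
  proof
    fix u assume "u \<in> compute_wspd D s T"
    then obtain v w where vw: "(v, w) \<in> ?P" "u \<in> gen D s v w" unfolding W by blast
    show "\<exists>A B. u = Upair A B \<and> A \<subseteq> D \<and> B \<subseteq> D \<and> ball_ws s A B"
      using gen_A[OF _ _ _ _ assms(1) vw(2)] good[OF vw(1)] by blast
  qed
  have part2: "\<exists>!u. u \<in> compute_wspd D s T \<and> sepU p q u" if pq: "p \<in> D" "q \<in> D" "p \<noteq> q" for p q
  proof -
    have ne: "fst p \<noteq> fst q" using fst_inj pq by blast
    obtain v w where vw: "(v, w) \<in> ?P" "sepP (fst p) (fst q) (v, w)"
      using ck_wspd_cover[of "fst p" T "fst q" "3 * s + 6"] T(1) pq ne by force
    have g: "pts v \<subseteq> fst ` D" "pts w \<subseteq> fst ` D" "pts v \<inter> pts w = {}"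
      "distinct (leaves v)" "distinct (leaves w)" using good[OF vw(1)] by auto
    have ex1: "\<exists>!u. u \<in> gen D s v w \<and> sepU p q u"
    proof (cases "fst p \<in> pts v \<and> fst q \<in> pts w")
      case True
      then show ?thesis using gen_B[OF g pq(1,2)] by blast
    next
      case False
      then have "fst q \<in> pts v" "fst p \<in> pts w" using vw(2) by (auto simp: sepP_def)
      then have "\<exists>!u. u \<in> gen D s v w \<and> sepU q p u" using gen_B[OF g pq(2,1)] by blast
      then show ?thesis by (simp only: sepU_sym[of q p])
    qed
    then obtain u where u: "u \<in> gen D s v w" "sepU p q u" by blast
    show ?thesis
    proof (rule ex1I[where a=u])
      show "u \<in> compute_wspd D s T \<and> sepU p q u" using u vw(1) unfolding W by blast
    next
      fix u' assume u': "u' \<in> compute_wspd D s T \<and> sepU p q u'"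
      then obtain v' w' where vw': "(v', w') \<in> ?P" "u' \<in> gen D s v' w'" unfolding W by blast
      have "sepP (fst p) (fst q) (v', w')"
        using gen_C[OF _ _ vw'(2)] good[OF vw'(1)] u' pq(3) by blast
      then have "(v', w') = (v, w)" using ck_wspd_unique[OF T(2) vw'(1) vw(1)] vw(2) by blast
      then have "u' \<in> gen D s v w" using vw'(2) by simp
      then show "u' = u" using ex1 u u' by blast
    qed
  qed
  show ?thesis
    unfolding is_wspd_def
  proof (rule conjI)
    show "\<forall>w\<in>compute_wspd D s T. \<exists>A B. w = Upair A B \<and> A \<subseteq> D \<and> B \<subseteq> D \<and> ball_ws s A B"
      by (rule part1)
    show "\<forall>p\<in>D. \<forall>q\<in>D. p \<noteq> q \<longrightarrow>
      (\<exists>!w. w \<in> compute_wspd D s T \<and> (\<exists>A B. w = Upair A B \<and> p \<in> A \<and> q \<in> B))"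
    proof (intro ballI impI)
      fix p q assume "p \<in> D" "q \<in> D" "p \<noteq> q"
      then show "\<exists>!w. w \<in> compute_wspd D s T \<and> (\<exists>A B. w = Upair A B \<and> p \<in> A \<and> q \<in> B)"
        using part2 unfolding sepU_def by blast
    qed
  qed
qed

end

theorem lemma5:
  fixes D :: "('a::euclidean_space \<times> real) set" and s :: real and T :: "'a stree"
  assumes "finite D"
    and "\<forall>b\<in>D. snd b \<ge> 0"
    and "\<forall>b\<in>D. \<forall>b'\<in>D. b \<noteq> b' \<longrightarrow> cball (fst b) (snd b) \<inter> cball (fst b') (snd b') = {}"
    and "s > 0"
    and "is_split_tree (fst ` D) T"
  shows "is_wspd D s (compute_wspd D s T)"
  using main[OF assms(2,3,4,5)] .

end
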